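(* Let $V$ be a real vector space of dimension $n$, $1\le k\le n-1$. For $B\in\wedge^{k+1}V^*$ and a subspace $L\subseteq V\oplus\wedge^kV^*$ set $e^BL=\{X+\alpha+i_XB\mid X+\alpha\in L\}$. Then: (a) if $L\subseteq\wedge^kV^*$ is weakly lagrangian, then $e^BL$ is weakly lagrangian for every $B\in\wedge^{k+1}V^*$; (b) if $L$ is a standard weakly lagrangian subspace with $\mathrm{pr}_1(L)\neq\{0\}$, then $e^BL$ is weakly lagrangian for every $B\in\wedge^{k+1}V^*$ if and only if $L$ is lagrangian; (c) if $L$ is a non-standard weakly lagrangian subspace, then there exists $B\in\wedge^{k+1}V^*$ such that $e^BL$ is not weakly lagrangian.
   Context: On $V\oplus\wedge^kV^*$ consider the pairing $\langle X+\alpha,Y+\beta\rangle=i_X\beta+i_Y\alpha\in\wedge^{k-1}V^*$; $L^\perp$ is the orthogonal of $L$; $L$ is isotropic if $L\subseteq L^\perp$, lagrangian if $L=L^\perp$, and weakly lagrangian if isotropic and $L\cap V=\mathrm{pr}_2(L)^\circ$, where $\mathrm{pr}_1,\mathrm{pr}_2$ are the projections onto $V$, $\wedge^kV^*$, and for $S\subseteq\wedge^kV^*$, $S^\circ=\{X\in V\mid i_X\eta=0\ \forall\eta\in S\}$. For $E\subseteq V$, $\mathrm{Ann}(E)=\{\alpha\in\wedge^kV^*\mid i_Y\alpha=0\ \forall Y\in E\}$. An isotropic $L$ with $E=\mathrm{pr}_1(L)$ is standard if $\mathrm{Ann}(E)^\circ=E$ (equivalently $\dim E=n$ or $\dim E\le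 n-k$), and non-standard otherwise. *)

theory Defs
  imports "HOL-Analysis.Analysis"
begin

text \<open>A k-form on the finite-dimensional real vector space 'v is represented as a
  function on argument sequences (nat \<Rightarrow> 'v) which depends only on the first k
  arguments, is linear in each of them and alternating.\<close>

type_synonym 'v form = "(nat \<Rightarrow> 'v) \<Rightarrow> real"

definition forms :: "nat \<Rightarrow> ('v::real_vector) form set" where
  "forms k = {\<alpha>.
     (\<forall>v w. (\<forall>i<k. v i = w i) \<longrightarrow> \<alpha> v = \<alpha> w) \<and>
     (\<forall>v i. i < k \<longrightarrow> linear (\<lambda>x. \<alpha> (v(i := x)))) \<and>
     (\<forall>v i j. i < k \<longrightarrow> j < k \<longrightarrow> i \<noteq> j \<longrightarrow> v i = v j \<longrightarrow> \<alpha> v = 0)}"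

definition iota :: "'v \<Rightarrow> 'v form \<Rightarrow> 'v form" where
  "iota X \<alpha> = (\<lambda>v. \<alpha> (\<lambda>i. if i = 0 then X else v (i - 1)))"

definition is_subspace :: "nat \<Rightarrow> ('v::real_vector \<times> 'v form) set \<Rightarrow> bool" where
  "is_subspace k L \<longleftrightarrow> L \<subseteq> UNIV \<times> forms k \<and> (0, \<lambda>v. 0) \<in> L \<and>
     (\<forall>X \<alpha> Y \<beta>. (X, \<alpha>) \<in> L \<longrightarrow> (Y, \<beta>) \<in> L \<longrightarrow> (X + Y, \<lambda>v. \<alpha> v + \<beta> v) \<in> L) \<and>
     (\<forall>c X \<alpha>. (X, \<alpha>) \<in> L \<longrightarrow> (c *\<^sub>R X, \<lambda>v. c * \<alpha> v) \<in> L)"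

definition pairing :: "('v \<times> 'v form) \<Rightarrow> ('v \<times> 'v form) \<Rightarrow> 'v form" where
  "pairing p q = (\<lambda>v. iota (fst p) (snd q) v + iota (fst q) (snd p) v)"

definition orth :: "nat \<Rightarrow> ('v::real_vector \<times> 'v form) set \<Rightarrow> ('v \<times> 'v form) set" where
  "orth k L = {q \<in> UNIV \<times> forms k. \<forall>p \<in> L. pairing p q = (\<lambda>v. 0)}"

definition isotropic :: "nat \<Rightarrow> ('v::real_vector \<times> 'v form) set \<Rightarrow> bool" where
  "isotropic k L \<longleftrightarrow> L \<subseteq> orth k L"

definition lagrangian :: "nat \<Rightarrow> ('v::real_vector \<times> 'v form) set \<Rightarrow> bool" where
  "lagrangian k L \<longleftrightarrow> L = orth k L"

definition annV :: "'v form set \<Rightarrow> 'v set" where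
  "annV S = {X. \<forall>\<eta>\<in>S. iota X \<eta> = (\<lambda>v. 0)}"

definition capV :: "('v::real_vector \<times> 'v form) set \<Rightarrow> 'v set" where
  "capV L = {X. (X, \<lambda>v. 0) \<in> L}"

definition weakly_lagrangian :: "nat \<Rightarrow> ('v::real_vector \<times> 'v form) set \<Rightarrow> bool" where
  "weakly_lagrangian k L \<longleftrightarrow> isotropic k L \<and> capV L = annV (snd ` L)"

definition Ann :: "nat \<Rightarrow> ('v::real_vector) set \<Rightarrow> 'v form set" where
  "Ann k E = {\<alpha> \<in> forms k. \<forall>Y\<in>E. iota Y \<alpha> = (\<lambda>v. 0)}"

definition standard :: "nat \<Rightarrow> ('v::real_vector \<times> 'v form) set \<Rightarrow> bool" where
  "standard k L \<longleftrightarrow> annV (Ann k (fst ` L)) = fst ` L"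

definition expB :: "'v form \<Rightarrow> ('v \<times> 'v form) set \<Rightarrow> ('v \<times> 'v form) set" where
  "expB B L = (\<lambda>(X, \<alpha>). (X, \<lambda>v. \<alpha> v + iota X B v)) ` L"

end

theory Submission
  imports Defs
begin

lemma forms_iff: "\<alpha> \<in> forms k \<longleftrightarrow>
     (\<forall>v w. (\<forall>i<k. v i = w i) \<longrightarrow> \<alpha> v = \<alpha> w) \<and>
     (\<forall>v i. i < k \<longrightarrow> linear (\<lambda>x. \<alpha> (v(i := x)))) \<and>
     (\<forall>v i j. i < k \<longrightarrow> j < k \<longrightarrow> i \<noteq> j \<longrightarrow> v i = v j \<longrightarrow> \<alpha> v = 0)"
  unfolding forms_def by (rule mem_Collect_eq)

lemma formsD1: assumes "\<alpha> \<in> forms k" "\<And>i. i<k \<Longrightarrow> v i = w i" shows "\<alpha> v = \<alpha> w"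
proof -
  have "\<forall>v w. (\<forall>i<k. v i = w i) \<longrightarrow> \<alpha> v = \<alpha> w" using assms(1) unfolding forms_iff by (rule conjunct1)
  then show ?thesis using assms(2) by simp
qed

lemma formsD2: assumes "\<alpha> \<in> forms k" "i < k" shows "linear (\<lambda>x. \<alpha> (v(i := x)))"
proof -
  have "\<forall>v i. i < k \<longrightarrow> linear (\<lambda>x. \<alpha> (v(i := x)))" using assms(1) unfolding forms_iff by (elim conjE)
  then show ?thesis using assms(2) by simp
qed
lemma formsD3: assumes "\<alpha> \<in> forms k" "i < k" "j < k" "i \<noteq> j" "v i = v j" shows "\<alpha> v = 0"
proof -
  have "\<forall>v i j. i < k \<longrightarrow> j < k \<longrightarrow> i \<noteq> j \<longrightarrow> v i = v j \<longrightarrow> \<alpha> v = 0" using assms(1) unfolding forms_iff by (elim conjE)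
  then show ?thesis using assms(2-) by simp
qed

lemma forms_add_slot: "\<alpha> \<in> forms k \<Longrightarrow> i < k \<Longrightarrow> \<alpha> (v(i := x + y)) = \<alpha> (v(i:=x)) + \<alpha> (v(i:=y))"
  using formsD2[of \<alpha> k i v] unfolding linear_iff by simp
lemma forms_scale_slot: "\<alpha> \<in> forms k \<Longrightarrow> i < k \<Longrightarrow> \<alpha> (v(i := c *\<^sub>R x)) = c * \<alpha> (v(i:=x))"
  using formsD2[of \<alpha> k i v] unfolding linear_iff by simp
lemma forms_zero_slot: assumes "\<alpha> \<in> forms k" "i < k" "v i = 0" shows "\<alpha> v = 0"
proof -
  have "\<alpha> (v(i := 0 *\<^sub>R 0)) = 0 * \<alpha> (v(i:=0))" using forms_scale_slot[OF assms(1,2)] .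
  moreover have "v(i := 0 *\<^sub>R 0) = v" using assms(3) by (simp add: fun_eq_iff)
  ultimately show ?thesis by simp
qed

lemma forms_I:
  assumes "\<And>v w. (\<And>i. i<k \<Longrightarrow> v i = w i) \<Longrightarrow> \<alpha> v = \<alpha> w"
    and "\<And>v i x y. i < k \<Longrightarrow> \<alpha> (v(i := x + y)) = \<alpha> (v(i:=x)) + \<alpha> (v(i:=y))"
    and "\<And>v i c x. i < k \<Longrightarrow> \<alpha> (v(i := c *\<^sub>R x)) = c * \<alpha> (v(i:=x))"
    and "\<And>v i j. i < k \<Longrightarrow> j < k \<Longrightarrow> i \<noteq> j \<Longrightarrow> v i = v j \<Longrightarrow> \<alpha> v = 0"
  shows "\<alpha> \<in> forms k"
  unfolding forms_iff
proof (intro conjI allI impI)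
  fix v w :: "nat \<Rightarrow> 'a" assume "\<forall>i<k. v i = w i" then show "\<alpha> v = \<alpha> w" using assms(1) by blast
next
  fix v :: "nat \<Rightarrow> 'a" and i assume "i < k" then show "linear (\<lambda>x. \<alpha> (v(i := x)))"
    unfolding linear_iff using assms(2,3) by simp
next
  fix v :: "nat \<Rightarrow> 'a" and i j assume "i < k" "j < k" "i \<noteq> j" "v i = v j" then show "\<alpha> v = 0"
    using assms(4) by blast
qed

lemma forms_zero: "(\<lambda>v. 0) \<in> forms k"
  by (rule forms_I) simp_all
lemma forms_add: fixes \<alpha> \<beta> :: "('v::real_vector) form" assumes "\<alpha> \<in> forms k" "\<beta> \<in> forms k" shows "(\<lambda>v. \<alpha> v + \<beta> v) \<in> forms k"
proof (rule forms_I)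
  fix v w :: "nat \<Rightarrow> 'v" assume "\<And>i. i<k \<Longrightarrow> v i = w i"
  then show "\<alpha> v + \<beta> v = \<alpha> w + \<beta> w" using assms formsD1 by metis
next
  fix v :: "nat \<Rightarrow> 'v" and i x y assume "i < k"
  then show "\<alpha> (v(i := x + y)) + \<beta> (v(i := x + y)) = \<alpha> (v(i := x)) + \<beta> (v(i := x)) + (\<alpha> (v(i := y)) + \<beta> (v(i := y)))"
    using assms forms_add_slot[of \<alpha> k i v x y] forms_add_slot[of \<beta> k i v x y] by simp
next
  fix v :: "nat \<Rightarrow> 'v" and i c x assume "i < k"
  then show "\<alpha> (v(i := c *\<^sub>R x)) + \<beta> (v(i := c *\<^sub>R x)) = c * (\<alpha> (v(i := x)) + \<beta> (v(i := x)))"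
    using assms forms_scale_slot[of \<alpha> k i v c x] forms_scale_slot[of \<beta> k i v c x] by (simp add: algebra_simps)
next
  fix v :: "nat \<Rightarrow> 'v" and i j assume "i < k" "j < k" "i \<noteq> j" "v i = v j"
  then show "\<alpha> v + \<beta> v = 0" using assms formsD3[of \<alpha> k i j v] formsD3[of \<beta> k i j v] by simp
qed

lemma forms_scale: fixes \<alpha> :: "('v::real_vector) form" assumes "\<alpha> \<in> forms k" shows "(\<lambda>v. c * \<alpha> v) \<in> forms k"
proof (rule forms_I)
  fix v w :: "nat \<Rightarrow> 'v" assume "\<And>i. i<k \<Longrightarrow> v i = w i"
  then show "c * \<alpha> v = c * \<alpha> w" using assms formsD1 by metis
next
  fix v :: "nat \<Rightarrow> 'v" and i x y assume "i < k"
  then show "c * \<alpha> (v(i := x + y)) = c * \<alpha> (v(i := x)) + c * \<alpha> (v(i := y))"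
    using assms forms_add_slot[of \<alpha> k i v x y] by (simp add: algebra_simps)
next
  fix v :: "nat \<Rightarrow> 'v" and i d x assume "i < k"
  then show "c * \<alpha> (v(i := d *\<^sub>R x)) = d * (c * \<alpha> (v(i := x)))"
    using assms forms_scale_slot[of \<alpha> k i v d x] by (simp add: algebra_simps)
next
  fix v :: "nat \<Rightarrow> 'v" and i j assume "i < k" "j < k" "i \<noteq> j" "v i = v j"
  then show "c * \<alpha> v = 0" using assms formsD3[of \<alpha> k i j v] by simp
qed

lemma forms_uminus: "\<alpha> \<in> forms k \<Longrightarrow> (\<lambda>v. - \<alpha> v) \<in> forms k"
  using forms_scale[of \<alpha> k "-1"] by simp

lemma forms_diff: "\<alpha> \<in> forms k \<Longrightarrow> \<beta> \<in> forms k \<Longrightarrow> (\<lambda>v. \<alpha> v - \<beta> v) \<in> forms k"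
  using forms_add[OF _ forms_uminus, of \<alpha> k \<beta>] by simp

lemma forms_sum: "finite S \<Longrightarrow> (\<And>b. b \<in> S \<Longrightarrow> f b \<in> forms k) \<Longrightarrow> (\<lambda>v. \<Sum>b\<in>S. f b v) \<in> forms k"
proof (induction S rule: finite_induct)
  case empty then show ?case by (simp add: forms_zero)
next
  case (insert x F)
  then show ?case using forms_add[of "f x" k "\<lambda>v. \<Sum>b\<in>F. f b v"] by simp
qed

lemma swap_slots:
  assumes "\<alpha> \<in> forms k" "i < k" "j < k" "i \<noteq> j"
  shows "\<alpha> (v(i := x, j := y)) = - \<alpha> (v(i := y, j := x))"
proof -
  define g where "g x y = \<alpha> (v(i := x, j := y))" for x y
  have addL: "g (a + b) c = g a c + g b c" for a b c
  proof -
    have e: "\<And>z. v(i := z, j := c) = (v(j:=c))(i := z)" using assms(4) by (auto simp: fun_eq_iff)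
    show ?thesis unfolding g_def e by (rule forms_add_slot[OF assms(1,2)])
  qed
  have addR: "g a (b + c) = g a b + g a c" for a b c
    unfolding g_def using forms_add_slot[OF assms(1,3), of "v(i:=a)" b c] by simp
  have z: "g a a = 0" for a
    unfolding g_def by (rule formsD3[OF assms]) auto
  have "0 = g (x+y) (x+y)" using z by simp
  also have "\<dots> = g x x + g x y + (g y x + g y y)" by (simp add: addL addR)
  also have "\<dots> = g x y + g y x" using z by simp
  finally have "g x y = - g y x" by linarith
  then show ?thesis unfolding g_def .
qed


lemma swap_generic:
  fixes f :: "(nat \<Rightarrow> 'v::real_vector) \<Rightarrow> real"
  assumes ij: "i \<noteq> j"
    and ai: "\<And>v x y. f (v(i := x + y)) = f (v(i:=x)) + f (v(i:=y))"
    and aj: "\<And>v x y. f (v(j := x + y)) = f (v(j:=x)) + f (v(j:=y))"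
    and z0: "\<And>v. v i = v j \<Longrightarrow> f v = 0"
  shows "f (v(i := x, j := y)) = - f (v(i := y, j := x))"
proof -
  define g where "g x y = f (v(i := x, j := y))" for x y
  have addL: "g (a + b) c = g a c + g b c" for a b c
  proof -
    have e: "\<And>z. v(i := z, j := c) = (v(j:=c))(i := z)" using ij by (auto simp: fun_eq_iff)
    show ?thesis unfolding g_def e by (rule ai)
  qed
  have addR: "g a (b + c) = g a b + g a c" for a b c
    unfolding g_def by (simp add: aj)
  have z: "g a a = 0" for a
    unfolding g_def by (rule z0) (simp add: ij)
  have "0 = g (x+y) (x+y)" using z by simp
  also have "\<dots> = g x x + g x y + (g y x + g y y)" by (simp add: addL addR)
  also have "\<dots> = g x y + g y x" using z by simp
  finally have "g x y = - g y x" by linarith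
  then show ?thesis unfolding g_def .
qed

lemma alt_from_adj:
  fixes f :: "(nat \<Rightarrow> 'v::real_vector) \<Rightarrow> real"
  assumes sw: "\<And>v j x y. Suc j < n \<Longrightarrow> f (v(j := x, Suc j := y)) = - f (v(j := y, Suc j := x))"
    and adj: "\<And>v j. Suc j < n \<Longrightarrow> v j = v (Suc j) \<Longrightarrow> f v = 0"
  shows "a + Suc d < n \<Longrightarrow> v a = v (a + Suc d) \<Longrightarrow> f v = 0"
proof (induction d arbitrary: v)
  case 0
  then show ?case using adj[of a v] by simp
next
  case (Suc d)
  define c where "c = a + Suc d"
  have cb: "a + Suc (Suc d) = Suc c" unfolding c_def by simp
  define v' where "v' = v(c := v (Suc c), Suc c := v c)"
  have "v = v(c := v c, Suc c := v (Suc c))" by simp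
  then have "f v = f (v(c := v c, Suc c := v (Suc c)))" by simp
  also have "\<dots> = - f v'" unfolding v'_def using sw[of c v] Suc.prems cb by simp
  finally have fv: "f v = - f v'" .
  have "v' a = v' (a + Suc d)" unfolding v'_def c_def using Suc.prems by simp
  moreover have "a + Suc d < n" using Suc.prems by simp
  ultimately have "f v' = 0" using Suc.IH by blast
  then show ?case using fv by simp
qed

lemma forms_I_adj:
  fixes \<alpha> :: "(nat \<Rightarrow> 'v::real_vector) \<Rightarrow> real"
  assumes d: "\<And>v w. (\<And>i. i<k \<Longrightarrow> v i = w i) \<Longrightarrow> \<alpha> v = \<alpha> w"
    and a: "\<And>v i x y. i < k \<Longrightarrow> \<alpha> (v(i := x + y)) = \<alpha> (v(i:=x)) + \<alpha> (v(i:=y))"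
    and s: "\<And>v i c x. i < k \<Longrightarrow> \<alpha> (v(i := c *\<^sub>R x)) = c * \<alpha> (v(i:=x))"
    and adj: "\<And>v j. Suc j < k \<Longrightarrow> v j = v (Suc j) \<Longrightarrow> \<alpha> v = 0"
  shows "\<alpha> \<in> forms k"
proof (rule forms_I[OF d a s])
  have sw: "\<alpha> (v(j := x, Suc j := y)) = - \<alpha> (v(j := y, Suc j := x))" if "Suc j < k" for v j x y
  proof (rule swap_generic)
    show "\<alpha> (w(j := x + y)) = \<alpha> (w(j := x)) + \<alpha> (w(j := y))" for w x y using a[of j w x y] that by simp
    show "\<alpha> (w(Suc j := x + y)) = \<alpha> (w(Suc j := x)) + \<alpha> (w(Suc j := y))" for w x y using a[of "Suc j" w x y] that by simp
    show "w j = w (Suc j) \<Longrightarrow> \<alpha> w = 0" for w using adj[of j w] that by simp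
  qed simp
  have key: "\<And>a d v. a + Suc d < k \<Longrightarrow> v a = v (a + Suc d) \<Longrightarrow> \<alpha> v = 0"
  proof -
    fix a d and v :: "nat \<Rightarrow> 'v" assume h: "a + Suc d < k" "v a = v (a + Suc d)"
    show "\<alpha> v = 0"
      by (rule alt_from_adj[of k \<alpha>, OF _ _ h]) (rule sw, assumption, rule adj, assumption+)
  qed
  fix v :: "nat \<Rightarrow> 'v" and i j assume "i < k" "j < k" "i \<noteq> j" "v i = v j"
  then show "\<alpha> v = 0"
  proof (cases "i < j")
    case True
    then obtain d where "j = i + Suc d" using less_iff_Suc_add by (metis add_Suc_right add.commute)
    then show ?thesis using key[of i d v] \<open>j < k\<close> \<open>v i = v j\<close> by simp
  next
    case False
    then have "j < i" using \<open>i \<noteq> j\<close> by simp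
    then obtain d where "i = j + Suc d" using less_iff_Suc_add by (metis add_Suc_right add.commute)
    then show ?thesis using key[of j d v] \<open>i < k\<close> \<open>v i = v j\<close> by simp
  qed
qed


definition sh :: "'v \<Rightarrow> (nat \<Rightarrow> 'v) \<Rightarrow> nat \<Rightarrow> 'v" where
  "sh X v = (\<lambda>i. if i = 0 then X else v (i - 1))"

lemma iota_sh: "iota X \<alpha> v = \<alpha> (sh X v)"
  unfolding iota_def sh_def by simp

lemma sh_upd: "sh X (v(i := x)) = (sh X v)(Suc i := x)"
  unfolding sh_def by (auto simp: fun_eq_iff)

lemma sh_upd0: "sh X v = (sh Y v)(0 := X)"
  unfolding sh_def by (auto simp: fun_eq_iff)

lemma iota_forms:
  fixes B :: "('v::real_vector) form"
  assumes "B \<in> forms (Suc k)"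
  shows "iota X B \<in> forms k"
proof (rule forms_I)
  fix v w :: "nat \<Rightarrow> 'v" assume h: "\<And>i. i < k \<Longrightarrow> v i = w i"
  show "iota X B v = iota X B w" unfolding iota_sh
    by (rule formsD1[OF assms]) (use h in \<open>auto simp: sh_def\<close>)
next
  fix v :: "nat \<Rightarrow> 'v" and i x y assume "i < k"
  then show "iota X B (v(i := x + y)) = iota X B (v(i := x)) + iota X B (v(i := y))"
    unfolding iota_sh sh_upd by (intro forms_add_slot[OF assms]) simp
next
  fix v :: "nat \<Rightarrow> 'v" and i c x assume "i < k"
  then show "iota X B (v(i := c *\<^sub>R x)) = c * iota X B (v(i := x))"
    unfolding iota_sh sh_upd by (intro forms_scale_slot[OF assms]) simp
next
  fix v :: "nat \<Rightarrow> 'v" and i j assume "i < k" "j < k" "i \<noteq> j" "v i = v j"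
  then show "iota X B v = 0" unfolding iota_sh
    by (intro formsD3[OF assms, of "Suc i" "Suc j"]) (auto simp: sh_def)
qed

lemma iota_vec_add:
  assumes "B \<in> forms (Suc k)"
  shows "iota (X + Y) B = (\<lambda>v. iota X B v + iota Y B v)"
proof
  fix v
  have "iota (X + Y) B v = B ((sh X v)(0 := X + Y))" unfolding iota_sh using sh_upd0[of "X+Y" v X] by simp
  also have "\<dots> = B ((sh X v)(0 := X)) + B ((sh X v)(0 := Y))" by (rule forms_add_slot[OF assms]) simp
  also have "\<dots> = iota X B v + iota Y B v" unfolding iota_sh using sh_upd0[of X v X] sh_upd0[of Y v X] by simp
  finally show "iota (X + Y) B v = iota X B v + iota Y B v" .
qed

lemma iota_vec_scale:
  assumes "B \<in> forms (Suc k)"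
  shows "iota (c *\<^sub>R X) B = (\<lambda>v. c * iota X B v)"
proof
  fix v
  have "iota (c *\<^sub>R X) B v = B ((sh X v)(0 := c *\<^sub>R X))" unfolding iota_sh using sh_upd0[of "c *\<^sub>R X" v X] by simp
  also have "\<dots> = c * B ((sh X v)(0 := X))" by (rule forms_scale_slot[OF assms]) simp
  also have "\<dots> = c * iota X B v" unfolding iota_sh using sh_upd0[of X v X] by simp
  finally show "iota (c *\<^sub>R X) B v = c * iota X B v" .
qed

lemma iota_vec_zero:
  assumes "B \<in> forms (Suc k)"
  shows "iota 0 B = (\<lambda>v. 0)"
  using iota_vec_scale[OF assms, of 0 0] by simp

lemma iota_form_add: "iota X (\<lambda>v. \<alpha> v + \<beta> v) = (\<lambda>v. iota X \<alpha> v + iota X \<beta> v)"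
  unfolding iota_def by simp
lemma iota_form_diff: "iota X (\<lambda>v. \<alpha> v - \<beta> v) = (\<lambda>v. iota X \<alpha> v - iota X \<beta> v)"
  unfolding iota_def by simp
lemma iota_form_scale: "iota X (\<lambda>v. c * \<alpha> v) = (\<lambda>v. c * iota X \<alpha> v)"
  unfolding iota_def by simp
lemma iota_form_uminus: "iota X (\<lambda>v. - \<alpha> v) = (\<lambda>v. - iota X \<alpha> v)"
  unfolding iota_def by simp
lemma iota_form_zero: "iota X (\<lambda>v. 0) = (\<lambda>v. 0)"
  unfolding iota_def by simp

lemma iota_iota: "iota X (iota Y B) v = B ((\<lambda>j. v (j - 2))(0 := Y, 1 := X))"
  unfolding iota_def by (rule arg_cong[where f=B]) (auto simp: fun_eq_iff numeral_2_eq_2)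

lemma iota_anti:
  assumes "B \<in> forms (Suc (Suc k))"
  shows "iota X (iota Y B) = (\<lambda>v. - iota Y (iota X B) v)"
proof
  fix v
  show "iota X (iota Y B) v = - iota Y (iota X B) v"
    unfolding iota_iota by (rule swap_slots[OF assms]) auto
qed

lemma iota_self:
  assumes "B \<in> forms (Suc (Suc k))"
  shows "iota X (iota X B) = (\<lambda>v. 0)"
proof
  fix v
  show "iota X (iota X B) v = 0"
    unfolding iota_iota by (rule formsD3[OF assms, of 0 1]) auto
qed


definition del :: "nat \<Rightarrow> (nat \<Rightarrow> 'v) \<Rightarrow> nat \<Rightarrow> 'v" where
  "del i v = (\<lambda>j. if j < i then v j else v (Suc j))"

definition wedge :: "nat \<Rightarrow> 'v::real_inner \<Rightarrow> 'v form \<Rightarrow> 'v form" where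
  "wedge k e \<eta> = (\<lambda>v. \<Sum>i\<le>k. (-1)^i * (e \<bullet> v i) * \<eta> (del i v))"

lemma del_upd_same: "del m (v(m:=x)) = del m v"
  unfolding del_def by (auto simp: fun_eq_iff)

lemma del_upd_other: "i \<noteq> m \<Longrightarrow> del i (v(m:=x)) = (del i v)((if m < i then m else m - 1) := x)"
  unfolding del_def by (auto simp: fun_eq_iff)

lemma zero_if_first:
  assumes "g 0 = Y" "iota Y \<eta> = (\<lambda>v. 0)"
  shows "\<eta> g = 0"
proof -
  have "sh Y (\<lambda>j. g (Suc j)) = g" using assms(1) unfolding sh_def by (auto simp: fun_eq_iff)
  then have "\<eta> g = iota Y \<eta> (\<lambda>j. g (Suc j))" unfolding iota_sh by simp
  then show ?thesis using assms(2) by (simp add: fun_eq_iff)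
qed

lemma wedge_term_add:
  fixes \<eta> :: "('v::real_inner) form"
  assumes "\<eta> \<in> forms k" "i \<le> k" "m < Suc k"
  shows "(-1)^i * (e \<bullet> (v(m := x + y)) i) * \<eta> (del i (v(m := x + y))) =
         (-1)^i * (e \<bullet> (v(m := x)) i) * \<eta> (del i (v(m := x))) +
         (-1)^i * (e \<bullet> (v(m := y)) i) * \<eta> (del i (v(m := y)))"
proof (cases "i = m")
  case True
  then show ?thesis by (simp add: del_upd_same inner_add_right algebra_simps)
next
  case False
  have m': "(if m < i then m else m - 1) < k" using False assms(2,3) by auto
  show ?thesis using False unfolding del_upd_other[OF False]
    using forms_add_slot[OF assms(1) m', of "del i v" x y] by (simp add: algebra_simps)
qed

lemma wedge_term_scale:
  fixes \<eta> :: "('v::real_inner) form"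
  assumes "\<eta> \<in> forms k" "i \<le> k" "m < Suc k"
  shows "(-1)^i * (e \<bullet> (v(m := c *\<^sub>R x)) i) * \<eta> (del i (v(m := c *\<^sub>R x))) =
         c * ((-1)^i * (e \<bullet> (v(m := x)) i) * \<eta> (del i (v(m := x))))"
proof (cases "i = m")
  case True
  then show ?thesis by (simp add: del_upd_same algebra_simps)
next
  case False
  have m': "(if m < i then m else m - 1) < k" using False assms(2,3) by auto
  show ?thesis using False unfolding del_upd_other[OF False]
    using forms_scale_slot[OF assms(1) m', of "del i v" c x] by (simp add: algebra_simps)
qed

lemma wedge_forms:
  fixes \<eta> :: "('v::real_inner) form"
  assumes eta: "\<eta> \<in> forms k"
  shows "wedge k e \<eta> \<in> forms (Suc k)"
proof (rule forms_I_adj)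
  fix v w :: "nat \<Rightarrow> 'v" assume h: "\<And>i. i < Suc k \<Longrightarrow> v i = w i"
  have "\<eta> (del i v) = \<eta> (del i w)" if "i \<le> k" for i
    by (rule formsD1[OF eta]) (use h that in \<open>auto simp: del_def\<close>)
  moreover have "v i = w i" if "i \<le> k" for i using h that by simp
  ultimately show "wedge k e \<eta> v = wedge k e \<eta> w" unfolding wedge_def by (intro sum.cong) auto
next
  fix v :: "nat \<Rightarrow> 'v" and m x y assume m: "m < Suc k"
  show "wedge k e \<eta> (v(m := x + y)) = wedge k e \<eta> (v(m := x)) + wedge k e \<eta> (v(m := y))"
    unfolding wedge_def sum.distrib[symmetric] by (intro sum.cong refl wedge_term_add[OF eta _ m]) simp
next
  fix v :: "nat \<Rightarrow> 'v" and m c x assume m: "m < Suc k"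
  show "wedge k e \<eta> (v(m := c *\<^sub>R x)) = c * wedge k e \<eta> (v(m := x))"
    unfolding wedge_def sum_distrib_left by (intro sum.cong refl wedge_term_scale[OF eta _ m]) simp
next
  fix v :: "nat \<Rightarrow> 'v" and m assume m: "Suc m < Suc k" and eq: "v m = v (Suc m)"
  define T where "T i = (-1)^i * (e \<bullet> v i) * \<eta> (del i v)" for i
  have z: "T i = 0" if "i \<le> k" "i \<noteq> m" "i \<noteq> Suc m" for i
  proof (cases "i < m")
    case True
    have "\<eta> (del i v) = 0"
      by (rule formsD3[OF eta, of "m - 1" m]) (use True m eq in \<open>auto simp: del_def\<close>)
    then show ?thesis unfolding T_def by simp
  next
    case False
    then have "Suc m < i" using that by simp
    have "\<eta> (del i v) = 0"
      by (rule formsD3[OF eta, of m "Suc m"]) (use \<open>Suc m < i\<close> that eq in \<open>auto simp: del_def\<close>)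
    then show ?thesis unfolding T_def by simp
  qed
  have dd: "del m v = del (Suc m) v"
  proof
    fix j show "del m v j = del (Suc m) v j"
      using eq unfolding del_def by (cases "j < m"; cases "j = m") auto
  qed
  have "wedge k e \<eta> v = sum T {..k}" unfolding wedge_def T_def by simp
  also have "\<dots> = sum T {m, Suc m}"
    by (rule sum.mono_neutral_right) (use m z in auto)
  also have "\<dots> = T m + T (Suc m)" by simp
  also have "\<dots> = 0" unfolding T_def using dd eq by simp
  finally show "wedge k e \<eta> v = 0" .
qed

lemma wedge_iota_e:
  fixes \<eta> :: "('v::real_inner) form"
  assumes "e \<bullet> e = 1" "iota e \<eta> = (\<lambda>v. 0)"
  shows "iota e (wedge k e \<eta>) = \<eta>"
proof
  fix w
  define T where "T i = (-1)^i * (e \<bullet> sh e w i) * \<eta> (del i (sh e w))" for i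
  have z: "T i = 0" if "i \<noteq> 0" for i
  proof -
    have "\<eta> (del i (sh e w)) = 0" by (rule zero_if_first[OF _ assms(2)]) (use that in \<open>simp add: del_def sh_def\<close>)
    then show ?thesis unfolding T_def by simp
  qed
  have d0: "del 0 (sh e w) = w" unfolding del_def sh_def by (simp add: fun_eq_iff)
  have "iota e (wedge k e \<eta>) w = sum T {..k}" unfolding iota_sh wedge_def T_def by simp
  also have "\<dots> = T 0 + sum T ({..k} - {0})" by (rule sum.remove) auto
  also have "sum T ({..k} - {0}) = 0" by (rule sum.neutral) (use z in auto)
  also have "T 0 = \<eta> w" unfolding T_def d0 using assms(1) by (simp add: sh_def)
  finally show "iota e (wedge k e \<eta>) w = \<eta> w" by simp
qed

lemma wedge_iota_perp:
  fixes \<eta> :: "('v::real_inner) form"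
  assumes "e \<bullet> Y = 0" "iota Y \<eta> = (\<lambda>v. 0)"
  shows "iota Y (wedge k e \<eta>) = (\<lambda>v. 0)"
proof
  fix w
  have zz: "(-1)^i * (e \<bullet> sh Y w i) * \<eta> (del i (sh Y w)) = 0" for i
  proof (cases "i = 0")
    case True then show ?thesis using assms(1) by (simp add: sh_def)
  next
    case False
    have "\<eta> (del i (sh Y w)) = 0" by (rule zero_if_first[OF _ assms(2)]) (use False in \<open>simp add: del_def sh_def\<close>)
    then show ?thesis by simp
  qed
  show "iota Y (wedge k e \<eta>) w = 0" unfolding iota_sh wedge_def by (rule sum.neutral) (use zz in blast)
qed


lemma ext_exists:
  fixes \<delta> :: "'v::euclidean_space \<Rightarrow> 'v form"
  assumes k: "1 \<le> k" and fin: "finite S" and po: "pairwise orthogonal S" and nm: "\<forall>x\<in>S. norm x = 1"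
    and df: "\<And>X. \<delta> X \<in> forms k"
    and dadd: "\<And>X Y. \<delta> (X + Y) = (\<lambda>v. \<delta> X v + \<delta> Y v)"
    and dscale: "\<And>c X. \<delta> (c *\<^sub>R X) = (\<lambda>v. c * \<delta> X v)"
    and anti: "\<And>X Y. X \<in> span S \<Longrightarrow> Y \<in> span S \<Longrightarrow> iota X (\<delta> Y) = (\<lambda>v. - iota Y (\<delta> X) v)"
  shows "\<exists>B \<in> forms (Suc k). \<forall>X \<in> span S. iota X B = \<delta> X"
  using fin po nm anti
proof (induction S rule: finite_induct)
  case empty
  have d0: "\<delta> 0 = (\<lambda>v. 0)" using dscale[of 0 0] by simp
  show ?case
    by (rule bexI[of _ "\<lambda>v. 0"]) (auto simp: d0 iota_vec_zero[OF forms_zero] forms_zero)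
next
  case (insert e S')
  obtain k0 where k0: "k = Suc k0" using k by (cases k) auto
  have po': "pairwise orthogonal S'" using insert.prems(1) by (simp add: pairwise_insert)
  have oe: "orthogonal e y" if "y \<in> S'" for y
    using insert.prems(1) insert.hyps(2) that by (auto simp: pairwise_insert)
  have ee: "e \<bullet> e = 1" using insert.prems(2) by (metis insertI1 norm_eq_1)
  have anti': "iota X (\<delta> Y) = (\<lambda>v. - iota Y (\<delta> X) v)" if "X \<in> span S'" "Y \<in> span S'" for X Y
    using insert.prems(3) that by (meson span_mono subset_insertI subsetD)
  obtain B' where B': "B' \<in> forms (Suc k)" "\<forall>X\<in>span S'. iota X B' = \<delta> X"
    using insert.IH[OF po' _ anti'] insert.prems(2) by blast
  have B'2: "B' \<in> forms (Suc (Suc k0))" using B'(1) k0 by simp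
  define \<eta> where "\<eta> = (\<lambda>v. \<delta> e v - iota e B' v)"
  have eta: "\<eta> \<in> forms k" unfolding \<eta>_def by (rule forms_diff[OF df iota_forms[OF B'(1)]])
  have e_in: "e \<in> span (insert e S')" by (simp add: span_base)
  have ie_de: "iota e (\<delta> e) = (\<lambda>v. 0)"
  proof
    fix v have "iota e (\<delta> e) v = - iota e (\<delta> e) v" using insert.prems(3)[OF e_in e_in] by (metis)
    then show "iota e (\<delta> e) v = 0" by simp
  qed
  have ie_eta: "iota e \<eta> = (\<lambda>v. 0)"
    unfolding \<eta>_def iota_form_diff ie_de iota_self[OF B'2] by simp
  have iY_eta: "iota Y \<eta> = (\<lambda>v. 0)" if Y: "Y \<in> span S'" for Y
  proof -
    have Y': "Y \<in> span (insert e S')" using Y by (meson span_mono subset_insertI subsetD)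
    have "iota Y (\<delta> e) = (\<lambda>v. - iota e (\<delta> Y) v)" by (rule insert.prems(3)[OF Y' e_in])
    moreover have "iota Y (iota e B') = (\<lambda>v. - iota e (iota Y B') v)" by (rule iota_anti[OF B'2])
    moreover have "iota Y B' = \<delta> Y" using B'(2) Y by blast
    ultimately show ?thesis unfolding \<eta>_def iota_form_diff by simp
  qed
  have eY: "e \<bullet> Y = 0" if "Y \<in> span S'" for Y
    using orthogonal_to_span[OF that oe] by (simp add: orthogonal_def)
  define C where "C = wedge k e \<eta>"
  have C: "C \<in> forms (Suc k)" unfolding C_def by (rule wedge_forms[OF eta])
  define B where "B = (\<lambda>v. B' v + C v)"
  have B: "B \<in> forms (Suc k)" unfolding B_def by (rule forms_add[OF B'(1) C])
  have iBe: "iota e B = \<delta> e"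
    using wedge_iota_e[OF ee ie_eta, of k] unfolding B_def iota_form_add C_def by (simp add: \<eta>_def)
  have iBY: "iota Y B = \<delta> Y" if "Y \<in> span S'" for Y
    unfolding B_def iota_form_add C_def wedge_iota_perp[OF eY[OF that] iY_eta[OF that]]
    using B'(2) that by simp
  show ?case
  proof (rule bexI[OF _ B], intro ballI)
    fix X assume "X \<in> span (insert e S')"
    then obtain t where t: "X - t *\<^sub>R e \<in> span S'" using span_breakdown_eq by blast
    define Y where "Y = X - t *\<^sub>R e"
    have X: "X = t *\<^sub>R e + Y" unfolding Y_def by simp
    have "iota X B = (\<lambda>v. iota (t *\<^sub>R e) B v + iota Y B v)" unfolding X by (rule iota_vec_add[OF B])
    also have "\<dots> = (\<lambda>v. t * \<delta> e v + \<delta> Y v)" unfolding iota_vec_scale[OF B] iBe iBY[OF t[folded Y_def]] ..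
    also have "\<dots> = \<delta> X" unfolding X dadd dscale ..
    finally show "iota X B = \<delta> X" .
  qed
qed


lemma is_subspaceD:
  assumes "is_subspace k L"
  shows "L \<subseteq> UNIV \<times> forms k" "(0, \<lambda>v. 0) \<in> L"
    "\<And>X \<alpha> Y \<beta>. (X, \<alpha>) \<in> L \<Longrightarrow> (Y, \<beta>) \<in> L \<Longrightarrow> (X + Y, \<lambda>v. \<alpha> v + \<beta> v) \<in> L"
    "\<And>c X \<alpha>. (X, \<alpha>) \<in> L \<Longrightarrow> (c *\<^sub>R X, \<lambda>v. c * \<alpha> v) \<in> L"
  using assms unfolding is_subspace_def by blast+

lemma L_forms: "is_subspace k L \<Longrightarrow> (X, \<alpha>) \<in> L \<Longrightarrow> \<alpha> \<in> forms k"
  using is_subspaceD(1) by blast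

lemma L_diff:
  assumes "is_subspace k L" "(X, \<alpha>) \<in> L" "(X, \<beta>) \<in> L"
  shows "(0, \<lambda>v. \<alpha> v - \<beta> v) \<in> L"
proof -
  have "(X + (-1) *\<^sub>R X, \<lambda>v. \<alpha> v + (-1) * \<beta> v) \<in> L"
    by (rule is_subspaceD(3)[OF assms(1,2) is_subspaceD(4)[OF assms(1,3)]])
  then show ?thesis by simp
qed

lemma iso_D:
  assumes "isotropic k L" "(X, \<alpha>) \<in> L" "(Y, \<beta>) \<in> L"
  shows "iota X \<beta> v + iota Y \<alpha> v = 0"
proof -
  have "(Y, \<beta>) \<in> orth k L" using assms(1,3) unfolding isotropic_def by blast
  then have "pairing (X, \<alpha>) (Y, \<beta>) = (\<lambda>v. 0)" using assms(2) unfolding orth_def by blast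
  then show ?thesis unfolding pairing_def by (simp add: fun_eq_iff)
qed

lemma iso_W:
  assumes "1 \<le> k" "is_subspace k L" "isotropic k L" "(0, w) \<in> L" "(Y, \<beta>) \<in> L"
  shows "iota Y w = (\<lambda>v. 0)"
proof
  fix v
  obtain k0 where k0: "k = Suc k0" using assms(1) by (cases k) auto
  have "\<beta> \<in> forms (Suc k0)" using L_forms[OF assms(2,5)] k0 by simp
  then have "iota 0 \<beta> v = 0" using iota_vec_zero by metis
  then show "iota Y w v = 0" using iso_D[OF assms(3,4,5), of v] by simp
qed

lemma section_exists:
  fixes L :: "('v::euclidean_space \<times> 'v form) set"
  assumes L: "is_subspace k L"
  obtains Bs s where "finite Bs" "pairwise orthogonal Bs" "\<forall>x\<in>Bs. norm x = 1" "span Bs = fst ` L"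
    "\<And>X. s X \<in> forms k" "\<And>X Y. s (X+Y) = (\<lambda>v. s X v + s Y v)" "\<And>c X. s (c *\<^sub>R X) = (\<lambda>v. c * s X v)"
    "\<And>X. X \<in> fst ` L \<Longrightarrow> (X, s X) \<in> L"
proof -
  note LD = is_subspaceD[OF L]
  have sub: "subspace (fst ` L)"
  proof (rule subspaceI)
    show "0 \<in> fst ` L" using LD(2) by force
  next
    fix x y assume "x \<in> fst ` L" "y \<in> fst ` L"
    then obtain a b where "(x, a) \<in> L" "(y, b) \<in> L" by auto
    then show "x + y \<in> fst ` L" using LD(3) by force
  next
    fix c x assume "x \<in> fst ` L"
    then obtain a where "(x, a) \<in> L" by auto
    then show "c *\<^sub>R x \<in> fst ` L" using LD(4) by force
  qed
  obtain Bs where Bs: "Bs \<subseteq> fst ` L" "pairwise orthogonal Bs" "\<And>x. x \<in> Bs \<Longrightarrow> norm x = 1"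
    "independent Bs" "span Bs = fst ` L"
    using orthonormal_basis_subspace[OF sub] by metis
  have fin: "finite Bs" using Bs(4) by (rule finiteI_independent)
  define \<alpha> where "\<alpha> b = (SOME a. (b, a) \<in> L)" for b
  have a: "(b, \<alpha> b) \<in> L" if "b \<in> Bs" for b
  proof -
    have "b \<in> fst ` L" using Bs(1) that by blast
    then obtain a where "(b, a) \<in> L" by force
    then show ?thesis unfolding \<alpha>_def by (rule someI[where P="\<lambda>a. (b, a) \<in> L"])
  qed
  define s where "s X = (\<lambda>v. \<Sum>b\<in>Bs. (X \<bullet> b) * \<alpha> b v)" for X
  have sf: "s X \<in> forms k" for X
    unfolding s_def by (rule forms_sum[OF fin]) (rule forms_scale[OF L_forms[OF L a]])
  have sadd: "s (X+Y) = (\<lambda>v. s X v + s Y v)" for X Y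
    unfolding s_def by (simp add: inner_add_left distrib_right sum.distrib)
  have sscale: "s (c *\<^sub>R X) = (\<lambda>v. c * s X v)" for c X
    unfolding s_def by (simp add: sum_distrib_left mult.assoc)
  have sb: "s b = \<alpha> b" if b: "b \<in> Bs" for b
  proof
    fix v
    have "s b v = (\<Sum>b'\<in>Bs. (b \<bullet> b') * \<alpha> b' v)" unfolding s_def by simp
    also have "\<dots> = (b \<bullet> b) * \<alpha> b v + (\<Sum>b'\<in>Bs - {b}. (b \<bullet> b') * \<alpha> b' v)"
      by (rule sum.remove[OF fin b])
    also have "(\<Sum>b'\<in>Bs - {b}. (b \<bullet> b') * \<alpha> b' v) = 0"
    proof (rule sum.neutral, intro ballI)
      fix b' assume "b' \<in> Bs - {b}"
      then have "orthogonal b b'" using pairwiseD[OF Bs(2) b, of b'] by blast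
      then show "(b \<bullet> b') * \<alpha> b' v = 0" by (simp add: orthogonal_def)
    qed
    also have "b \<bullet> b = 1" using Bs(3)[OF b] by (metis norm_eq_1)
    finally show "s b v = \<alpha> b v" by simp
  qed
  have inL: "(X, s X) \<in> L" if "X \<in> fst ` L" for X
  proof -
    have X: "X \<in> span Bs" using that Bs(5) by simp
    show "(X, s X) \<in> L"
    proof (rule span_induct[OF X, where P="\<lambda>X. (X, s X) \<in> L"])
      show "subspace {X. (X, s X) \<in> L}"
      proof (rule subspaceI)
        have "s 0 = (\<lambda>v. 0)" unfolding s_def by simp
        then show "0 \<in> {X. (X, s X) \<in> L}" using LD(2) by simp
      next
        fix x y assume "x \<in> {X. (X, s X) \<in> L}" "y \<in> {X. (X, s X) \<in> L}"
        then show "x + y \<in> {X. (X, s X) \<in> L}" using LD(3) sadd by simp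
      next
        fix c x assume "x \<in> {X. (X, s X) \<in> L}"
        then show "c *\<^sub>R x \<in> {X. (X, s X) \<in> L}" using LD(4) sscale by simp
      qed
    next
      fix x assume "x \<in> Bs"
      then show "(x, s x) \<in> L" using a sb by simp
    qed
  qed
  show ?thesis
    by (rule that[OF fin Bs(2) _ Bs(5) sf sadd sscale inL]) (use Bs(3) in auto)
qed


lemma pairing_eq: "pairing (X, \<alpha>) (Y, \<beta>) = (\<lambda>v. iota X \<beta> v + iota Y \<alpha> v)"
  unfolding pairing_def by simp

lemma lagr_weak:
  assumes "lagrangian k M"
  shows "weakly_lagrangian k M"
proof -
  have M: "M = orth k M" using assms unfolding lagrangian_def .
  have "capV M = annV (snd ` M)"
  proof
    show "capV M \<subseteq> annV (snd ` M)"
    proof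
      fix X assume "X \<in> capV M"
      then have "(X, \<lambda>v. 0) \<in> orth k M" using M unfolding capV_def by simp
      then have h: "\<forall>p\<in>M. pairing p (X, \<lambda>v. 0) = (\<lambda>v. 0)" unfolding orth_def by blast
      show "X \<in> annV (snd ` M)" unfolding annV_def
      proof (intro CollectI ballI)
        fix \<eta> assume "\<eta> \<in> snd ` M"
        then obtain Y where "(Y, \<eta>) \<in> M" by force
        then have "pairing (Y, \<eta>) (X, \<lambda>v. 0) = (\<lambda>v. 0)" using h by blast
        then show "iota X \<eta> = (\<lambda>v. 0)" unfolding pairing_eq iota_form_zero by simp
      qed
    qed
  next
    show "annV (snd ` M) \<subseteq> capV M"
    proof
      fix X assume X: "X \<in> annV (snd ` M)"
      have "(X, \<lambda>v. 0) \<in> orth k M" unfolding orth_def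
      proof (intro CollectI conjI ballI)
        show "(X, \<lambda>v. 0) \<in> UNIV \<times> forms k" using forms_zero by simp
      next
        fix p assume "p \<in> M"
        then obtain Y \<eta> where p: "p = (Y, \<eta>)" "(Y, \<eta>) \<in> M" by (cases p) auto
        then have "iota X \<eta> = (\<lambda>v. 0)" using X unfolding annV_def by force
        then show "pairing p (X, \<lambda>v. 0) = (\<lambda>v. 0)" unfolding p pairing_eq iota_form_zero by simp
      qed
      then show "X \<in> capV M" using M unfolding capV_def by simp
    qed
  qed
  then show ?thesis unfolding weakly_lagrangian_def isotropic_def using M by simp
qed

lemma lagr_expB:
  assumes k: "1 \<le> k" and lag: "lagrangian k M" and B: "B \<in> forms (Suc k)"
  shows "lagrangian k (expB B M)"
proof -
  obtain k0 where k0: "k = Suc k0" using k by (cases k) auto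
  have B2: "B \<in> forms (Suc (Suc k0))" using B k0 by simp
  have M: "M = orth k M" using lag unfolding lagrangian_def .
  have Mf: "\<alpha> \<in> forms k" if "(X, \<alpha>) \<in> M" for X \<alpha>
    using that M unfolding orth_def by blast
  have Mo: "pairing p q = (\<lambda>v. 0)" if "p \<in> M" "q \<in> M" for p q
    using that M unfolding orth_def by blast
  have ex: "expB B M = {(X, \<lambda>v. \<alpha> v + iota X B v) | X \<alpha>. (X, \<alpha>) \<in> M}"
    unfolding expB_def by auto
  have "expB B M = orth k (expB B M)"
  proof
    show "expB B M \<subseteq> orth k (expB B M)"
    proof
      fix q assume "q \<in> expB B M"
      then obtain X \<alpha> where q: "q = (X, \<lambda>v. \<alpha> v + iota X B v)" "(X, \<alpha>) \<in> M" unfolding ex by blast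
      show "q \<in> orth k (expB B M)" unfolding orth_def
      proof (intro CollectI conjI ballI)
        show "q \<in> UNIV \<times> forms k" unfolding q
          using forms_add[OF Mf[OF q(2)] iota_forms[OF B]] by simp
      next
        fix p assume "p \<in> expB B M"
        then obtain Y \<beta> where p: "p = (Y, \<lambda>v. \<beta> v + iota Y B v)" "(Y, \<beta>) \<in> M" unfolding ex by blast
        have z: "pairing (Y, \<beta>) (X, \<alpha>) = (\<lambda>v. 0)" by (rule Mo[OF p(2) q(2)])
        show "pairing p q = (\<lambda>v. 0)"
          using z unfolding p q pairing_eq iota_form_add iota_anti[OF B2, of Y X]
          by (simp add: fun_eq_iff)
      qed
    qed
  next
    show "orth k (expB B M) \<subseteq> expB B M"
    proof
      fix q assume q: "q \<in> orth k (expB B M)"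
      obtain Y \<gamma> where qq: "q = (Y, \<gamma>)" by (cases q)
      have \<gamma>: "\<gamma> \<in> forms k" using q qq unfolding orth_def by auto
      have qo: "pairing p q = (\<lambda>v. 0)" if "p \<in> expB B M" for p using q that unfolding orth_def by blast
      define \<beta> where "\<beta> = (\<lambda>v. \<gamma> v - iota Y B v)"
      have "(Y, \<beta>) \<in> orth k M" unfolding orth_def
      proof (intro CollectI conjI ballI)
        show "(Y, \<beta>) \<in> UNIV \<times> forms k" unfolding \<beta>_def using forms_diff[OF \<gamma> iota_forms[OF B]] by simp
      next
        fix p assume pM: "p \<in> M"
        obtain X \<alpha> where p: "p = (X, \<alpha>)" by (cases p)
        have "(X, \<lambda>v. \<alpha> v + iota X B v) \<in> expB B M" unfolding ex using pM p by blast
        then have z: "pairing (X, \<lambda>v. \<alpha> v + iota X B v) (Y, \<gamma>) = (\<lambda>v. 0)" using qo qq by blast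
        show "pairing p (Y, \<beta>) = (\<lambda>v. 0)"
          using z unfolding p pairing_eq \<beta>_def iota_form_add iota_form_diff iota_anti[OF B2, of X Y]
          by (simp add: fun_eq_iff algebra_simps)
      qed
      then have "(Y, \<beta>) \<in> M" using M by simp
      moreover have "q = (Y, \<lambda>v. \<beta> v + iota Y B v)" unfolding qq \<beta>_def by simp
      ultimately show "q \<in> expB B M" unfolding ex by blast
    qed
  qed
  then show ?thesis unfolding lagrangian_def .
qed


lemma part_a:
  fixes L :: "('v::real_vector \<times> 'v form) set"
  assumes k: "1 \<le> k" and L: "is_subspace k L" and z: "\<forall>p\<in>L. fst p = 0"
    and w: "weakly_lagrangian k L" and B: "B \<in> forms (k + 1)"
  shows "weakly_lagrangian k (expB B L)"
proof -
  have B1: "B \<in> forms (Suc k)" using B by simp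
  have i0: "iota 0 B = (\<lambda>v. 0)" by (rule iota_vec_zero[OF B1])
  have "expB B L = L"
  proof
    show "expB B L \<subseteq> L"
    proof
      fix q assume "q \<in> expB B L"
      then obtain X \<alpha> where q: "q = (X, \<lambda>v. \<alpha> v + iota X B v)" "(X, \<alpha>) \<in> L" unfolding expB_def by auto
      have "X = 0" using z q(2) by force
      then show "q \<in> L" using q i0 by simp
    qed
  next
    show "L \<subseteq> expB B L"
    proof
      fix q assume qL: "q \<in> L"
      obtain X \<alpha> where q: "q = (X, \<alpha>)" by (cases q)
      have "X = 0" using z qL q by force
      then have "q = (\<lambda>(X, \<alpha>). (X, \<lambda>v. \<alpha> v + iota X B v)) q" using q i0 by simp
      then show "q \<in> expB B L" unfolding expB_def using qL by blast
    qed
  qed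
  then show ?thesis using w by simp
qed

lemma part_c:
  fixes L :: "('v::euclidean_space \<times> 'v form) set"
  assumes k: "1 \<le> k" and L: "is_subspace k L" and iso: "isotropic k L" and ns: "\<not> standard k L"
  shows "\<exists>B\<in>forms (k + 1). \<not> weakly_lagrangian k (expB B L)"
proof -
  define E where "E = fst ` L"
  have sub: "E \<subseteq> annV (Ann k E)" unfolding annV_def Ann_def by blast
  have ne: "annV (Ann k E) \<noteq> E" using ns unfolding standard_def E_def .
  obtain Z where Z: "Z \<in> annV (Ann k E)" "Z \<notin> E"
    using ne sub by blast
  obtain Bs s where Bs: "finite Bs" "pairwise orthogonal Bs" "\<forall>x\<in>Bs. norm x = 1" "span Bs = fst ` L"
    and s: "\<And>X. s X \<in> forms k" "\<And>X Y. s (X+Y) = (\<lambda>v. s X v + s Y v)" "\<And>c X. s (c *\<^sub>R X) = (\<lambda>v. c * s X v)"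
    "\<And>X. X \<in> fst ` L \<Longrightarrow> (X, s X) \<in> L"
    by (rule section_exists[OF L]) blast
  note Bs = Bs[folded E_def] and s = s[folded E_def]
  define \<delta> where "\<delta> X = (\<lambda>v. - s X v)" for X
  have "\<exists>B \<in> forms (Suc k). \<forall>X \<in> span Bs. iota X B = \<delta> X"
  proof (rule ext_exists[OF k Bs(1-3)])
    show "\<delta> X \<in> forms k" for X unfolding \<delta>_def by (rule forms_uminus[OF s(1)])
    show "\<delta> (X + Y) = (\<lambda>v. \<delta> X v + \<delta> Y v)" for X Y unfolding \<delta>_def s(2) by simp
    show "\<delta> (c *\<^sub>R X) = (\<lambda>v. c * \<delta> X v)" for c X unfolding \<delta>_def s(3) by simp
    show "iota X (\<delta> Y) = (\<lambda>v. - iota Y (\<delta> X) v)" if "X \<in> span Bs" "Y \<in> span Bs" for X Y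
    proof -
      have "iota X (s Y) v + iota Y (s X) v = 0" for v
        by (rule iso_D[OF iso s(4) s(4)]) (use that Bs(4) in auto)
      then show ?thesis unfolding \<delta>_def iota_form_uminus by (simp add: fun_eq_iff add_eq_0_iff)
    qed
  qed
  then obtain B where B: "B \<in> forms (Suc k)" "\<And>X. X \<in> E \<Longrightarrow> iota X B = (\<lambda>v. - s X v)"
    unfolding Bs(4) \<delta>_def by blast
  have "\<not> weakly_lagrangian k (expB B L)"
  proof
    assume w: "weakly_lagrangian k (expB B L)"
    have "Z \<in> annV (snd ` expB B L)" unfolding annV_def
    proof (intro CollectI ballI)
      fix \<eta> assume "\<eta> \<in> snd ` expB B L"
      then obtain X \<alpha> where XL: "(X, \<alpha>) \<in> L" and eta: "\<eta> = (\<lambda>v. \<alpha> v + iota X B v)"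
        unfolding expB_def by auto
      have XE: "X \<in> E" unfolding E_def using XL by force
      have eta2: "\<eta> = (\<lambda>v. \<alpha> v - s X v)" unfolding eta B(2)[OF XE] by simp
      have W: "(0, \<eta>) \<in> L" unfolding eta2 by (rule L_diff[OF L XL s(4)[OF XE]])
      have "\<eta> \<in> Ann k E" unfolding Ann_def
      proof (intro CollectI conjI ballI)
        show "\<eta> \<in> forms k" by (rule L_forms[OF L W])
        fix Y assume "Y \<in> E"
        then obtain \<beta> where "(Y, \<beta>) \<in> L" unfolding E_def by force
        then show "iota Y \<eta> = (\<lambda>v. 0)" by (rule iso_W[OF k L iso W])
      qed
      then show "iota Z \<eta> = (\<lambda>v. 0)" using Z(1) unfolding annV_def by blast
    qed
    then have "Z \<in> capV (expB B L)" using w unfolding weakly_lagrangian_def by simp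
    then have "(Z, \<lambda>v. 0) \<in> expB B L" unfolding capV_def by simp
    then obtain p where "p \<in> L" "(Z, \<lambda>v. 0) = (\<lambda>(X, \<alpha>). (X, \<lambda>v. \<alpha> v + iota X B v)) p"
      unfolding expB_def by blast
    then have "Z \<in> E" unfolding E_def by (cases p) force
    then show False using Z(2) by simp
  qed
  then show ?thesis using B(1) by auto
qed


lemma part_b_rev:
  fixes L :: "('v::euclidean_space \<times> 'v form) set"
  assumes k: "1 \<le> k" and L: "is_subspace k L" and iso: "isotropic k L" and st: "standard k L"
    and ne: "fst ` L \<noteq> {0}" and nl: "\<not> lagrangian k L"
  shows "\<exists>B\<in>forms (k + 1). \<not> weakly_lagrangian k (expB B L)"
proof -
  define E where "E = fst ` L"
  have stE: "annV (Ann k E) = E" using st unfolding standard_def E_def .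
  obtain k0 where k0: "k = Suc k0" using k by (cases k) auto
  obtain Bs s where Bs: "finite Bs" "pairwise orthogonal Bs" "\<forall>x\<in>Bs. norm x = 1" "span Bs = fst ` L"
    and s: "\<And>X. s X \<in> forms k" "\<And>X Y. s (X+Y) = (\<lambda>v. s X v + s Y v)" "\<And>c X. s (c *\<^sub>R X) = (\<lambda>v. c * s X v)"
    "\<And>X. X \<in> fst ` L \<Longrightarrow> (X, s X) \<in> L"
    by (rule section_exists[OF L]) blast
  note Bs = Bs[folded E_def] and s = s[folded E_def]
  note LD = is_subspaceD[OF L]
  have EL: "\<exists>\<alpha>. (X, \<alpha>) \<in> L" if "X \<in> E" for X using that unfolding E_def by force
  have "\<exists>\<omega>. \<omega> \<in> Ann k E \<and> (0, \<omega>) \<notin> L"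
  proof (rule ccontr)
    assume nex: "\<not> (\<exists>\<omega>. \<omega> \<in> Ann k E \<and> (0, \<omega>) \<notin> L)"
    have allW: "(0, \<omega>) \<in> L" if "\<omega> \<in> Ann k E" for \<omega> using nex that by blast
    have "L = orth k L"
    proof
      show "L \<subseteq> orth k L" using iso unfolding isotropic_def .
    next
      show "orth k L \<subseteq> L"
      proof
        fix q assume q: "q \<in> orth k L"
        obtain Y \<beta> where qq: "q = (Y, \<beta>)" by (cases q)
        have \<beta>: "\<beta> \<in> forms k" using q qq unfolding orth_def by auto
        have qo: "pairing p (Y, \<beta>) = (\<lambda>v. 0)" if "p \<in> L" for p using q qq that unfolding orth_def by blast
        have "Y \<in> annV (Ann k E)" unfolding annV_def
        proof (intro CollectI ballI)
          fix \<omega> assume \<omega>: "\<omega> \<in> Ann k E"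
          have "pairing (0, \<omega>) (Y, \<beta>) = (\<lambda>v. 0)" by (rule qo[OF allW[OF \<omega>]])
          moreover have "iota 0 \<beta> = (\<lambda>v. 0)" using \<beta> k0 iota_vec_zero by metis
          ultimately show "iota Y \<omega> = (\<lambda>v. 0)" unfolding pairing_eq by (simp add: fun_eq_iff)
        qed
        then have YE: "Y \<in> E" using stE by simp
        define \<gamma> where "\<gamma> = s Y"
        have \<gamma>L: "(Y, \<gamma>) \<in> L" unfolding \<gamma>_def by (rule s(4)[OF YE])
        define d where "d = (\<lambda>v. \<beta> v - \<gamma> v)"
        have "d \<in> Ann k E" unfolding Ann_def
        proof (intro CollectI conjI ballI)
          show "d \<in> forms k" unfolding d_def by (rule forms_diff[OF \<beta> s(1)[of Y, folded \<gamma>_def]])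
          fix X assume "X \<in> E"
          then obtain \<alpha> where XL: "(X, \<alpha>) \<in> L" using EL by blast
          have h1: "iota X \<beta> v + iota Y \<alpha> v = 0" for v
            using qo[OF XL] unfolding pairing_eq by (simp add: fun_eq_iff)
          have h2: "iota X \<gamma> v + iota Y \<alpha> v = 0" for v by (rule iso_D[OF iso XL \<gamma>L])
          show "iota X d = (\<lambda>v. 0)" unfolding d_def iota_form_diff
          proof
            fix v show "iota X \<beta> v - iota X \<gamma> v = 0" using h1[of v] h2[of v] by linarith
          qed
        qed
        then have "(0, d) \<in> L" by (rule allW)
        then have "(Y + 0, \<lambda>v. \<gamma> v + d v) \<in> L" by (rule LD(3)[OF \<gamma>L])
        then show "q \<in> L" unfolding qq d_def by simp
      qed
    qed
    then show False using nl unfolding lagrangian_def by simp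
  qed
  then obtain \<omega> where \<omega>: "\<omega> \<in> Ann k E" "(0, \<omega>) \<notin> L" by blast
  have \<omega>f: "\<omega> \<in> forms k" using \<omega>(1) unfolding Ann_def by blast
  have \<omega>E: "iota X \<omega> = (\<lambda>v. 0)" if "X \<in> E" for X using \<omega>(1) that unfolding Ann_def by blast
  have "0 \<in> E" unfolding E_def using LD(2) by force
  then obtain X0 where X0: "X0 \<in> E" "X0 \<noteq> 0" using ne unfolding E_def[symmetric] by blast
  have X0n: "X0 \<bullet> X0 \<noteq> 0" using X0(2) by simp
  define f where "f X = (X \<bullet> X0) / (X0 \<bullet> X0)" for X
  have f1: "f X0 = 1" unfolding f_def using X0n by simp
  define \<delta> where "\<delta> X = (\<lambda>v. - s X v + f X * \<omega> v)" for X
  have "\<exists>B \<in> forms (Suc k). \<forall>X \<in> span Bs. iota X B = \<delta> X"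
  proof (rule ext_exists[OF k Bs(1-3)])
    show "\<delta> X \<in> forms k" for X unfolding \<delta>_def
      using forms_add[OF forms_uminus[OF s(1)] forms_scale[OF \<omega>f]] by simp
    show "\<delta> (X + Y) = (\<lambda>v. \<delta> X v + \<delta> Y v)" for X Y unfolding \<delta>_def s(2) f_def
      by (simp add: fun_eq_iff inner_add_left add_divide_distrib algebra_simps)
    show "\<delta> (c *\<^sub>R X) = (\<lambda>v. c * \<delta> X v)" for c X unfolding \<delta>_def s(3) f_def
      by (simp add: fun_eq_iff algebra_simps)
    show "iota X (\<delta> Y) = (\<lambda>v. - iota Y (\<delta> X) v)" if "X \<in> span Bs" "Y \<in> span Bs" for X Y
    proof -
      have XY: "X \<in> E" "Y \<in> E" using that Bs(4) by auto
      have "iota X (s Y) v + iota Y (s X) v = 0" for v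
        by (rule iso_D[OF iso s(4) s(4)]) (use XY in auto)
      then show ?thesis unfolding \<delta>_def iota_form_uminus iota_form_add iota_form_scale \<omega>E[OF XY(1)] \<omega>E[OF XY(2)]
        by (simp add: fun_eq_iff add_eq_0_iff)
    qed
  qed
  then obtain B where B: "B \<in> forms (Suc k)" "\<And>X. X \<in> E \<Longrightarrow> iota X B = \<delta> X"
    unfolding Bs(4) by blast
  have B2: "B \<in> forms (Suc (Suc k0))" using B(1) k0 by simp
  have "\<not> weakly_lagrangian k (expB B L)"
  proof
    assume w: "weakly_lagrangian k (expB B L)"
    have "X0 \<in> annV (snd ` expB B L)" unfolding annV_def
    proof (intro CollectI ballI)
      fix \<eta> assume "\<eta> \<in> snd ` expB B L"
      then obtain X \<alpha> where XL: "(X, \<alpha>) \<in> L" and eta: "\<eta> = (\<lambda>v. \<alpha> v + iota X B v)"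
        unfolding expB_def by auto
      have XE: "X \<in> E" unfolding E_def using XL by force
      have h: "iota X0 \<alpha> v + iota X (s X0) v = 0" for v by (rule iso_D[OF iso s(4)[OF X0(1)] XL])
      have "iota X0 (iota X B) = (\<lambda>v. - iota X (iota X0 B) v)" by (rule iota_anti[OF B2])
      also have "\<dots> = (\<lambda>v. iota X (s X0) v)"
        unfolding B(2)[OF X0(1)] \<delta>_def iota_form_add iota_form_uminus iota_form_scale \<omega>E[OF XE] by simp
      finally have "iota X0 (iota X B) = (\<lambda>v. iota X (s X0) v)" .
      then show "iota X0 \<eta> = (\<lambda>v. 0)" unfolding eta iota_form_add using h by simp
    qed
    then have "X0 \<in> capV (expB B L)" using w unfolding weakly_lagrangian_def by simp
    then have "(X0, \<lambda>v. 0) \<in> expB B L" unfolding capV_def by simp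
    then obtain p where pL: "p \<in> L" and pe: "(X0, \<lambda>v. 0) = (\<lambda>(X, \<alpha>). (X, \<lambda>v. \<alpha> v + iota X B v)) p"
      unfolding expB_def by blast
    obtain X \<alpha> where p: "p = (X, \<alpha>)" by (cases p)
    have XX: "X = X0" using pe p by simp
    have "(\<lambda>v. 0) = (\<lambda>v. \<alpha> v + iota X0 B v)" using pe p XX by simp
    then have z: "\<alpha> v - s X0 v + \<omega> v = 0" for v
      unfolding B(2)[OF X0(1)] \<delta>_def f1 by (simp add: fun_eq_iff algebra_simps)
    have "\<omega> = (\<lambda>v. s X0 v - \<alpha> v)"
    proof
      fix v show "\<omega> v = s X0 v - \<alpha> v" using z[of v] by linarith
    qed
    moreover have "(0, \<lambda>v. s X0 v - \<alpha> v) \<in> L" by (rule L_diff[OF L s(4)[OF X0(1)]]) (use pL p XX in simp)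
    ultimately show False using \<omega>(2) by simp
  qed
  then show ?thesis using B(1) by auto
qed


theorem proposition3p20:
  fixes k :: nat
  assumes "1 \<le> k" and "k \<le> DIM('v::euclidean_space) - 1"
  shows
    "(\<forall>L :: ('v \<times> 'v form) set.
        is_subspace k L \<and> (\<forall>p\<in>L. fst p = 0) \<and> weakly_lagrangian k L \<longrightarrow>
        (\<forall>B\<in>forms (k + 1). weakly_lagrangian k (expB B L)))
     \<and> (\<forall>L :: ('v \<times> 'v form) set.
        is_subspace k L \<and> weakly_lagrangian k L \<and> standard k L \<and> fst ` L \<noteq> {0} \<longrightarrow>
        ((\<forall>B\<in>forms (k + 1). weakly_lagrangian k (expB B L)) \<longleftrightarrow> lagrangian k L))
     \<and> (\<forall>L :: ('v \<times> 'v form) set.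
        is_subspace k L \<and> weakly_lagrangian k L \<and> \<not> standard k L \<longrightarrow>
        (\<exists>B\<in>forms (k + 1). \<not> weakly_lagrangian k (expB B L)))"
proof (intro conjI allI impI)
  fix L :: "('v \<times> 'v form) set"
  assume h: "is_subspace k L \<and> (\<forall>p\<in>L. fst p = 0) \<and> weakly_lagrangian k L"
  show "\<forall>B\<in>forms (k + 1). weakly_lagrangian k (expB B L)"
    using part_a[OF assms(1)] h by blast
next
  fix L :: "('v \<times> 'v form) set"
  assume h: "is_subspace k L \<and> weakly_lagrangian k L \<and> standard k L \<and> fst ` L \<noteq> {0}"
  have iso: "isotropic k L" using h unfolding weakly_lagrangian_def by blast
  show "(\<forall>B\<in>forms (k + 1). weakly_lagrangian k (expB B L)) \<longleftrightarrow> lagrangian k L"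
  proof
    assume all: "\<forall>B\<in>forms (k + 1). weakly_lagrangian k (expB B L)"
    show "lagrangian k L"
    proof (rule ccontr)
      assume "\<not> lagrangian k L"
      then show False using part_b_rev[OF assms(1) _ iso] h all by blast
    qed
  next
    assume lag: "lagrangian k L"
    show "\<forall>B\<in>forms (k + 1). weakly_lagrangian k (expB B L)"
    proof
      fix B :: "'v form" assume "B \<in> forms (k + 1)"
      then have "B \<in> forms (Suc k)" by simp
      then show "weakly_lagrangian k (expB B L)" by (rule lagr_weak[OF lagr_expB[OF assms(1) lag]])
    qed
  qed
next
  fix L :: "('v \<times> 'v form) set"
  assume h: "is_subspace k L \<and> weakly_lagrangian k L \<and> \<not> standard k L"
  have iso: "isotropic k L" using h unfolding weakly_lagrangian_def by blast
  show "\<exists>B\<in>forms (k + 1). \<not> weakly_lagrangian k (expB B L)"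
    using part_c[OF assms(1) _ iso] h by blast
qed

end
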